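(* Let $\Gamma$ and $\Delta$ be finite subsets of ${\sf Frm}$. Then $\vdash_{\sf WF_{N_2}}\bigwedge\Gamma\rightarrow\bigvee\Delta$ if and only if $\vdash_{\sf M_{Nec}}(\bigwedge\Gamma\rightarrow\bigvee\Delta)^\square$, i.e. $\vdash_{\sf M_{Nec}}\square(\bigwedge\Gamma^\square\supset\bigvee\Delta^\square)$.
   Context: Language: countably many atoms $p,q,\dots$, the constant $\bot$, and binary connectives $\wedge,\vee,\rightarrow$ ($\rightarrow$ is strict implication). ${\sf Frm}$ is the set of formulas built from atoms and $\bot$ with $\wedge,\vee,\rightarrow$; $A,B,C,D$ range over ${\sf Frm}$; $\supset$ denotes material implication. The Hilbert system ${\sf WF_{N_2}}$ over ${\sf Frm}$ has axiom schemes $A\rightarrow(A\vee B)$; $B\rightarrow(A\vee B)$; $(A\wedge B)\rightarrow A$; $(A\wedge B)\rightarrow B$; $A\wedge(B\vee C)\rightarrow(A\wedge B)\vee(A\wedge C)$; $A\rightarrow A$; $\bot\rightarrow A$; and rules (from theorems to a theorem): from $A$ and $A\rightarrow B$ infer $B$; from $A$ infer $B\rightarrow A$; from $A\rightarrow B$ and $B\rightarrow C$ infer $A\rightarrow C$; from $A\rightarrow B$ and $A\rightarrow C$ infer $A\rightarrow(B\wedge C)$; from $A\rightarrow C$ and $B\rightarrow C$ infer $(A\vee B)\rightarrow C$; from $A$ and $B$ infer $A\wedge B$; (${\sf N_2}$) from $C\rightarrow A\vee D$ and $C\wedge B\rightarrow D$ infer $(A\rightarrow B)\rightarrow(C\rightarrow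 D)$. $\vdash_{\sf WF_{N_2}}A$ means $A$ is a theorem of this system. $\bigwedge\Gamma$ and $\bigvee\Delta$ denote the conjunction and disjunction of the members (empty conjunction read as $\top:=\bot\rightarrow\bot$, empty disjunction as $\bot$). The modal language $\mathcal{L}_\square$ has atoms, $\bot$, binary $\wedge,\vee,\supset$ and unary $\square$. ${\sf M_{Nec}}$ is the smallest set of $\mathcal{L}_\square$-formulas containing all classical propositional tautologies and $\square(\bot\supset\bot)$, and closed under modus ponens, uniform substitution, and the rule RM: from $A\supset B$ infer $\square A\supset\square B$ (equivalently, the monotonic classical modal logic ${\sf M}$ extended by the necessitation rule). The $\square$-translation is: $p^\square=p$, $\bot^\square=\bot$, $(A\circ B)^\square=A^\square\circ B^\square$ for $\circ\in\{\wedge,\vee,\supset\}$, $(A\rightarrow B)^\square=\square(A^\square\supset B^\square)$; $\Gamma^\square=\{A^\square:A\in\Gamma\}$. *)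

theory Defs
  imports Main
begin

datatype frm = Atom nat | Bot | And frm frm | Or frm frm | Imp frm frm

definition Top :: frm where "Top = Imp Bot Bot"

fun conj :: "frm list \<Rightarrow> frm" where
  "conj [] = Top"
| "conj [A] = A"
| "conj (A # As) = And A (conj As)"

fun disj :: "frm list \<Rightarrow> frm" where
  "disj [] = Bot"
| "disj [A] = A"
| "disj (A # As) = Or A (disj As)"

inductive WF_N2 :: "frm \<Rightarrow> bool" where
  ax_or1: "WF_N2 (Imp A (Or A B))"
| ax_or2: "WF_N2 (Imp B (Or A B))"
| ax_and1: "WF_N2 (Imp (And A B) A)"
| ax_and2: "WF_N2 (Imp (And A B) B)"
| ax_dist: "WF_N2 (Imp (And A (Or B C)) (Or (And A B) (And A C)))"
| ax_id: "WF_N2 (Imp A A)"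
| ax_bot: "WF_N2 (Imp Bot A)"
| r_mp: "WF_N2 A \<Longrightarrow> WF_N2 (Imp A B) \<Longrightarrow> WF_N2 B"
| r_weak: "WF_N2 A \<Longrightarrow> WF_N2 (Imp B A)"
| r_trans: "WF_N2 (Imp A B) \<Longrightarrow> WF_N2 (Imp B C) \<Longrightarrow> WF_N2 (Imp A C)"
| r_andI: "WF_N2 (Imp A B) \<Longrightarrow> WF_N2 (Imp A C) \<Longrightarrow> WF_N2 (Imp A (And B C))"
| r_orE: "WF_N2 (Imp A C) \<Longrightarrow> WF_N2 (Imp B C) \<Longrightarrow> WF_N2 (Imp (Or A B) C)"
| r_adj: "WF_N2 A \<Longrightarrow> WF_N2 B \<Longrightarrow> WF_N2 (And A B)"
| r_N2: "WF_N2 (Imp C (Or A D)) \<Longrightarrow> WF_N2 (Imp (And C B) D) \<Longrightarrow>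
         WF_N2 (Imp (Imp A B) (Imp C D))"

datatype mfrm = MAtom nat | MBot | MAnd mfrm mfrm | MOr mfrm mfrm | MImp mfrm mfrm
  | Box mfrm

text \<open>Classical evaluation: v values atoms, w values boxed formulas
  (boxed formulas are treated as propositional atoms).\<close>
fun meval :: "(nat \<Rightarrow> bool) \<Rightarrow> (mfrm \<Rightarrow> bool) \<Rightarrow> mfrm \<Rightarrow> bool" where
  "meval v w (MAtom n) = v n"
| "meval v w MBot = False"
| "meval v w (MAnd A B) = (meval v w A \<and> meval v w B)"
| "meval v w (MOr A B) = (meval v w A \<or> meval v w B)"
| "meval v w (MImp A B) = (meval v w A \<longrightarrow> meval v w B)"
| "meval v w (Box A) = w (Box A)"

definition tautology :: "mfrm \<Rightarrow> bool" where
  "tautology A = (\<forall>v w. meval v w A)"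

fun msubst :: "(nat \<Rightarrow> mfrm) \<Rightarrow> mfrm \<Rightarrow> mfrm" where
  "msubst s (MAtom n) = s n"
| "msubst s MBot = MBot"
| "msubst s (MAnd A B) = MAnd (msubst s A) (msubst s B)"
| "msubst s (MOr A B) = MOr (msubst s A) (msubst s B)"
| "msubst s (MImp A B) = MImp (msubst s A) (msubst s B)"
| "msubst s (Box A) = Box (msubst s A)"

inductive M_Nec :: "mfrm \<Rightarrow> bool" where
  taut: "tautology A \<Longrightarrow> M_Nec A"
| nec_top: "M_Nec (Box (MImp MBot MBot))"
| mp: "M_Nec A \<Longrightarrow> M_Nec (MImp A B) \<Longrightarrow> M_Nec B"
| us: "M_Nec A \<Longrightarrow> M_Nec (msubst s A)"
| RM: "M_Nec (MImp A B) \<Longrightarrow> M_Nec (MImp (Box A) (Box B))"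

fun btr :: "frm \<Rightarrow> mfrm" where
  "btr (Atom n) = MAtom n"
| "btr Bot = MBot"
| "btr (And A B) = MAnd (btr A) (btr B)"
| "btr (Or A B) = MOr (btr A) (btr B)"
| "btr (Imp A B) = Box (MImp (btr A) (btr B))"

end

theory Submission
  imports Defs
begin

lemma taut_mp1: "M_Nec A \<Longrightarrow> tautology (MImp A B) \<Longrightarrow> M_Nec B"
  using M_Nec.mp M_Nec.taut by blast

lemma taut_mp2: "M_Nec A \<Longrightarrow> M_Nec B \<Longrightarrow> tautology (MImp A (MImp B C)) \<Longrightarrow> M_Nec C"
  using M_Nec.mp M_Nec.taut by blast

lemma nec: "M_Nec A \<Longrightarrow> M_Nec (Box A)"
proof -
  assume a: "M_Nec A"
  have "M_Nec (MImp (MImp MBot MBot) A)"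
    by (rule taut_mp1[OF a]) (simp add: tautology_def)
  then have "M_Nec (MImp (Box (MImp MBot MBot)) (Box A))" by (rule M_Nec.RM)
  then show ?thesis using M_Nec.nec_top M_Nec.mp by blast
qed

lemma msubst_meval:
  "meval v w (msubst s A) = meval (\<lambda>n. meval v w (s n)) (\<lambda>B. case B of Box C \<Rightarrow> w (Box (msubst s C)) | _ \<Rightarrow> False) A"
  by (induction A) auto

lemma taut_subst: "tautology A \<Longrightarrow> tautology (msubst s A)"
  unfolding tautology_def using msubst_meval by metis

lemma msubst_comp: "msubst s (msubst t A) = msubst (\<lambda>n. msubst s (t n)) A"
  by (induction A) auto

lemma msubst_id: "msubst MAtom A = A"
  by (induction A) auto

definition WW :: "mfrm \<Rightarrow> bool" where
  "WW B = (case B of Box C \<Rightarrow> M_Nec C | _ \<Rightarrow> False)"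

lemma unbox_aux: "M_Nec A \<Longrightarrow> \<forall>s v. meval v WW (msubst s A)"
proof (induction rule: M_Nec.induct)
  case (taut A)
  then show ?case using taut_subst tautology_def by blast
next
  case nec_top
  have "M_Nec (MImp MBot MBot)" by (rule M_Nec.taut) (simp add: tautology_def)
  then show ?case by (simp add: WW_def)
next
  case (mp A B)
  then show ?case by simp
next
  case (us A s)
  then show ?case by (simp add: msubst_comp)
next
  case (RM A B)
  show ?case
  proof (intro allI)
    fix s v
    have "M_Nec (msubst s (MImp A B))" using RM(1) M_Nec.us by blast
    then show "meval v WW (msubst s (MImp (Box A) (Box B)))"
      by (simp add: WW_def) (meson M_Nec.mp)
  qed
qed

lemma unbox: "M_Nec (Box C) \<Longrightarrow> M_Nec C"
proof -
  assume "M_Nec (Box C)"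
  then have "meval (\<lambda>n. True) WW (msubst MAtom (Box C))" using unbox_aux by blast
  then show ?thesis by (simp only: msubst_id) (simp add: WW_def)
qed

section \<open>Soundness of translation\<close>

lemma taut_box2: "M_Nec (Box A) \<Longrightarrow> M_Nec (Box B) \<Longrightarrow> tautology (MImp A (MImp B C)) \<Longrightarrow> M_Nec (Box C)"
  by (rule nec, rule taut_mp2[OF unbox unbox])

lemma sound: "WF_N2 F \<Longrightarrow> M_Nec (btr F)"
proof (induction rule: WF_N2.induct)
  case (r_mp A B)
  have "M_Nec (MImp (btr A) (btr B))" using r_mp.IH(2) unbox by simp
  then show ?case using r_mp.IH(1) M_Nec.mp by blast
next
  case (r_weak A B)
  have "M_Nec (MImp (btr B) (btr A))"
    by (rule taut_mp1[OF r_weak.IH]) (simp add: tautology_def)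
  then show ?case by (simp add: nec)
next
  case (r_trans A B C)
  have "M_Nec (Box (MImp (btr A) (btr C)))"
    by (rule taut_box2[OF r_trans.IH[simplified]]) (simp add: tautology_def)
  then show ?case by simp
next
  case (r_andI A B C)
  have "M_Nec (Box (MImp (btr A) (MAnd (btr B) (btr C))))"
    by (rule taut_box2[OF r_andI.IH[simplified]]) (simp add: tautology_def)
  then show ?case by simp
next
  case (r_orE A C B)
  have "M_Nec (Box (MImp (MOr (btr A) (btr B)) (btr C)))"
    by (rule taut_box2[OF r_orE.IH[simplified]]) (simp add: tautology_def)
  then show ?case by simp
next
  case (r_adj A B)
  have "M_Nec (MAnd (btr A) (btr B))"
    by (rule taut_mp2[OF r_adj.IH]) (simp add: tautology_def)
  then show ?case by simp
next
  case (r_N2 C A D B)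
  have u1: "M_Nec (MImp (btr C) (MOr (btr A) (btr D)))" using r_N2.IH(1) unbox by simp
  have u2: "M_Nec (MImp (MAnd (btr C) (btr B)) (btr D))" using r_N2.IH(2) unbox by simp
  have "M_Nec (MImp (MImp (btr A) (btr B)) (MImp (btr C) (btr D)))"
    by (rule taut_mp2[OF u1 u2]) (auto simp add: tautology_def)
  then have "M_Nec (MImp (Box (MImp (btr A) (btr B))) (Box (MImp (btr C) (btr D))))" by (rule M_Nec.RM)
  then show ?case by (simp add: nec)
qed (simp_all add: nec M_Nec.taut tautology_def)

section \<open>Neighbourhood semantics\<close>

fun sat :: "'w set \<Rightarrow> ('w \<Rightarrow> 'w set set) \<Rightarrow> (nat \<Rightarrow> 'w set) \<Rightarrow> 'w \<Rightarrow> mfrm \<Rightarrow> bool" where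
  "sat W N V x (MAtom n) = (x \<in> V n)"
| "sat W N V x MBot = False"
| "sat W N V x (MAnd A B) = (sat W N V x A \<and> sat W N V x B)"
| "sat W N V x (MOr A B) = (sat W N V x A \<or> sat W N V x B)"
| "sat W N V x (MImp A B) = (sat W N V x A \<longrightarrow> sat W N V x B)"
| "sat W N V x (Box A) = ({y\<in>W. sat W N V y A} \<in> N x)"

lemma sat_meval: "meval (\<lambda>n. sat W N V x (MAtom n)) (sat W N V x) A = sat W N V x A"
  by (induction A) auto

lemma sat_subst: "sat W N V x (msubst s A) = sat W N (\<lambda>n. {y. sat W N V y (s n)}) x A"
  by (induction A arbitrary: x) auto

lemma nb_sound:
  assumes top: "\<And>x. x \<in> W \<Longrightarrow> W \<in> N x"
    and mono: "\<And>x S T. x \<in> W \<Longrightarrow> S \<in> N x \<Longrightarrow> S \<subseteq> T \<Longrightarrow> T \<subseteq> W \<Longrightarrow> T \<in> N x"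
  shows "M_Nec A \<Longrightarrow> \<forall>V. \<forall>x\<in>W. sat W N V x A"
proof (induction rule: M_Nec.induct)
  case (taut A)
  show ?case
  proof (intro allI ballI)
    fix V x
    have "meval (\<lambda>n. sat W N V x (MAtom n)) (sat W N V x) A" using taut unfolding tautology_def by blast
    then show "sat W N V x A" by (simp only: sat_meval)
  qed
next
  case nec_top
  then show ?case using top by simp
next
  case (mp A B)
  then show ?case by simp
next
  case (us A s)
  then show ?case by (simp add: sat_subst)
next
  case (RM A B)
  show ?case
  proof (intro allI ballI)
    fix V x assume x: "x \<in> W"
    have "{y\<in>W. sat W N V y A} \<subseteq> {y\<in>W. sat W N V y B}" using RM.IH by auto
    then show "sat W N V x (MImp (Box A) (Box B))" using mono[OF x] by auto
  qed
qed

section \<open>Prime theories and Lindenbaum\<close>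

definition thy :: "frm set \<Rightarrow> bool" where
  "thy x = ((\<forall>A B. A \<in> x \<longrightarrow> WF_N2 (Imp A B) \<longrightarrow> B \<in> x) \<and>
               (\<forall>A B. A \<in> x \<longrightarrow> B \<in> x \<longrightarrow> And A B \<in> x))"

definition ptheory :: "frm set \<Rightarrow> bool" where
  "ptheory x = (thy x \<and> x \<noteq> {} \<and> Bot \<notin> x \<and> (\<forall>A B. Or A B \<in> x \<longrightarrow> A \<in> x \<or> B \<in> x))"

lemma and_mono1: "WF_N2 (Imp (And (And F1 F2) C) (And F1 C))"
  by (rule WF_N2.r_andI[OF WF_N2.r_trans[OF WF_N2.ax_and1 WF_N2.ax_and1] WF_N2.ax_and2])

lemma and_mono2: "WF_N2 (Imp (And (And F1 F2) C) (And F2 C))"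
  by (rule WF_N2.r_andI[OF WF_N2.r_trans[OF WF_N2.ax_and1 WF_N2.ax_and2] WF_N2.ax_and2])

lemma lind:
  assumes nd: "\<not> WF_N2 (Imp A B)"
  shows "\<exists>x. ptheory x \<and> A \<in> x \<and> B \<notin> x"
proof -
  define FF where "FF = {x. thy x \<and> A \<in> x \<and> B \<notin> x}"
  have x0: "{C. WF_N2 (Imp A C)} \<in> FF"
    unfolding FF_def thy_def using nd WF_N2.r_trans WF_N2.r_andI WF_N2.ax_id by blast
  have "\<exists>M\<in>FF. \<forall>X\<in>FF. M \<subseteq> X \<longrightarrow> X = M"
  proof (rule subset_Zorn_nonempty)
    show "FF \<noteq> {}" using x0 by blast
  next
    fix CC assume ne: "CC \<noteq> {}" and ch: "subset.chain FF CC"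
    have sub: "CC \<subseteq> FF" and cmp: "\<And>X Y. X \<in> CC \<Longrightarrow> Y \<in> CC \<Longrightarrow> X \<subseteq> Y \<or> Y \<subseteq> X"
      using ch unfolding subset.chain_def by auto
    have th: "\<And>X. X \<in> CC \<Longrightarrow> thy X \<and> A \<in> X \<and> B \<notin> X" using sub FF_def by auto
    have "thy (\<Union>CC)"
      unfolding thy_def
    proof (intro conjI allI impI)
      fix C D assume "C \<in> \<Union>CC" "WF_N2 (Imp C D)"
      then show "D \<in> \<Union>CC" using th unfolding thy_def by blast
    next
      fix C D assume "C \<in> \<Union>CC" "D \<in> \<Union>CC"
      then obtain X Y where "X \<in> CC" "Y \<in> CC" "C \<in> X" "D \<in> Y" by blast
      then show "And C D \<in> \<Union>CC" using cmp th unfolding thy_def by blast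
    qed
    moreover have "A \<in> \<Union>CC" using ne th by blast
    moreover have "B \<notin> \<Union>CC" using th by blast
    ultimately show "\<Union>CC \<in> FF" unfolding FF_def by blast
  qed
  then obtain M where MF: "M \<in> FF" and max: "\<And>X. X \<in> FF \<Longrightarrow> M \<subseteq> X \<Longrightarrow> X = M" by blast
  have thM: "thy M" and AM: "A \<in> M" and BM: "B \<notin> M" using MF FF_def by auto
  have cl: "\<And>C D. C \<in> M \<Longrightarrow> WF_N2 (Imp C D) \<Longrightarrow> D \<in> M"
    and cj: "\<And>C D. C \<in> M \<Longrightarrow> D \<in> M \<Longrightarrow> And C D \<in> M" using thM thy_def by auto
  have ext: "\<exists>F\<in>M. WF_N2 (Imp (And F C) B)" if CM: "C \<notin> M" for C
  proof (rule ccontr)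
    assume nb: "\<not> ?thesis"
    define MC where "MC = {E. \<exists>F\<in>M. WF_N2 (Imp (And F C) E)}"
    have "thy MC" unfolding thy_def
    proof (intro conjI allI impI)
      fix E D assume "E \<in> MC" "WF_N2 (Imp E D)"
      then show "D \<in> MC" unfolding MC_def using WF_N2.r_trans by blast
    next
      fix E1 E2 assume "E1 \<in> MC" "E2 \<in> MC"
      then obtain F1 F2 where F: "F1 \<in> M" "F2 \<in> M" "WF_N2 (Imp (And F1 C) E1)" "WF_N2 (Imp (And F2 C) E2)"
        unfolding MC_def by blast
      have "And F1 F2 \<in> M" using cj F by blast
      moreover have "WF_N2 (Imp (And (And F1 F2) C) (And E1 E2))"
        by (rule WF_N2.r_andI[OF WF_N2.r_trans[OF and_mono1 F(3)] WF_N2.r_trans[OF and_mono2 F(4)]])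
      ultimately show "And E1 E2 \<in> MC" unfolding MC_def by blast
    qed
    moreover have "M \<subseteq> MC" unfolding MC_def using WF_N2.ax_and1 by blast
    moreover have "C \<in> MC" unfolding MC_def using AM WF_N2.ax_and2 by blast
    moreover have "B \<notin> MC" using nb MC_def by blast
    ultimately have "MC \<in> FF" "M \<subseteq> MC" "C \<in> MC" using AM unfolding FF_def by auto
    then show False using max CM by blast
  qed
  have prime: "C \<in> M \<or> D \<in> M" if OM: "Or C D \<in> M" for C D
  proof (rule ccontr)
    assume "\<not> ?thesis"
    then obtain F1 F2 where F: "F1 \<in> M" "F2 \<in> M" "WF_N2 (Imp (And F1 C) B)" "WF_N2 (Imp (And F2 D) B)"
      using ext by blast
    let ?F = "And F1 F2"
    have G: "And ?F (Or C D) \<in> M" using cj F OM by blast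
    have "WF_N2 (Imp (Or (And ?F C) (And ?F D)) B)"
      by (rule WF_N2.r_orE[OF WF_N2.r_trans[OF and_mono1 F(3)] WF_N2.r_trans[OF and_mono2 F(4)]])
    then have "WF_N2 (Imp (And ?F (Or C D)) B)" using WF_N2.ax_dist WF_N2.r_trans by blast
    then show False using cl G BM by blast
  qed
  have "Bot \<notin> M" using cl BM WF_N2.ax_bot by blast
  then have "ptheory M" unfolding ptheory_def using thM AM prime by blast
  then show ?thesis using AM BM by blast
qed

section \<open>Canonical model\<close>

lemma valid_imp: "(\<And>y. ptheory y \<Longrightarrow> A \<in> y \<Longrightarrow> B \<in> y) \<Longrightarrow> WF_N2 (Imp A B)"
  using lind by blast

lemma pt_cl: "ptheory x \<Longrightarrow> A \<in> x \<Longrightarrow> WF_N2 (Imp A B) \<Longrightarrow> B \<in> x"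
  unfolding ptheory_def thy_def by blast

lemma pt_and: "ptheory x \<Longrightarrow> (And A B \<in> x) = (A \<in> x \<and> B \<in> x)"
  unfolding ptheory_def thy_def using WF_N2.ax_and1 WF_N2.ax_and2 by blast

lemma pt_or: "ptheory x \<Longrightarrow> (Or A B \<in> x) = (A \<in> x \<or> B \<in> x)"
  unfolding ptheory_def thy_def using WF_N2.ax_or1 WF_N2.ax_or2 by blast

lemma pt_thm: "ptheory x \<Longrightarrow> WF_N2 A \<Longrightarrow> A \<in> x"
proof -
  assume p: "ptheory x" and a: "WF_N2 A"
  then obtain C where "C \<in> x" unfolding ptheory_def by blast
  then show ?thesis using pt_cl[OF p] WF_N2.r_weak[OF a] by blast
qed

definition Wc :: "frm set set" where "Wc = {x. ptheory x}"
definition Nc :: "frm set \<Rightarrow> frm set set set" where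
  "Nc x = {T. T \<subseteq> Wc \<and> (T = Wc \<or> (\<exists>A B. Imp A B \<in> x \<and> {y\<in>Wc. A \<in> y \<longrightarrow> B \<in> y} \<subseteq> T))}"
definition Vc :: "nat \<Rightarrow> frm set set" where "Vc n = {x. Atom n \<in> x}"

lemma imp_case:
  assumes p: "ptheory x"
  shows "({y\<in>Wc. A \<in> y \<longrightarrow> B \<in> y} \<in> Nc x) = (Imp A B \<in> x)"
proof
  assume "Imp A B \<in> x" then show "{y\<in>Wc. A \<in> y \<longrightarrow> B \<in> y} \<in> Nc x" unfolding Nc_def by blast
next
  let ?S = "{y\<in>Wc. A \<in> y \<longrightarrow> B \<in> y}"
  assume "?S \<in> Nc x"
  then have "?S = Wc \<or> (\<exists>A' B'. Imp A' B' \<in> x \<and> {y\<in>Wc. A' \<in> y \<longrightarrow> B' \<in> y} \<subseteq> ?S)"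
    unfolding Nc_def by blast
  then show "Imp A B \<in> x"
  proof
    assume "?S = Wc"
    then have "WF_N2 (Imp A B)" by (intro valid_imp) (auto simp: Wc_def)
    then show ?thesis using pt_thm[OF p] by blast
  next
    assume "\<exists>A' B'. Imp A' B' \<in> x \<and> {y\<in>Wc. A' \<in> y \<longrightarrow> B' \<in> y} \<subseteq> ?S"
    then obtain A' B' where i: "Imp A' B' \<in> x" and sub: "{y\<in>Wc. A' \<in> y \<longrightarrow> B' \<in> y} \<subseteq> ?S" by blast
    have s: "\<And>y. ptheory y \<Longrightarrow> A' \<in> y \<longrightarrow> B' \<in> y \<Longrightarrow> A \<in> y \<Longrightarrow> B \<in> y"
      using sub unfolding Wc_def by blast
    have 1: "WF_N2 (Imp A (Or A' B))"
      by (rule valid_imp) (metis s pt_or)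
    have 2: "WF_N2 (Imp (And A B') B)"
      by (rule valid_imp) (metis s pt_and)
    have "WF_N2 (Imp (Imp A' B') (Imp A B))" by (rule WF_N2.r_N2[OF 1 2])
    then show ?thesis using pt_cl[OF p i] by blast
  qed
qed

lemma truth: "ptheory y \<Longrightarrow> sat Wc Nc Vc y (btr F) = (F \<in> y)"
proof (induction F arbitrary: y)
  case (Atom n) then show ?case by (simp add: Vc_def)
next
  case Bot then show ?case by (simp add: ptheory_def)
next
  case (And A B) then show ?case by (simp add: pt_and)
next
  case (Or A B) then show ?case by (simp add: pt_or)
next
  case (Imp A B)
  have "{z\<in>Wc. sat Wc Nc Vc z (MImp (btr A) (btr B))} = {z\<in>Wc. A \<in> z \<longrightarrow> B \<in> z}"
    using Imp.IH by (auto simp: Wc_def)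
  then show ?case using imp_case[OF Imp.prems] by simp
qed

lemma complete: "M_Nec (btr (Imp A B)) \<Longrightarrow> WF_N2 (Imp A B)"
proof -
  assume "M_Nec (btr (Imp A B))"
  then have m: "M_Nec (MImp (btr A) (btr B))" using unbox by simp
  have top: "\<And>x. x \<in> Wc \<Longrightarrow> Wc \<in> Nc x" unfolding Nc_def by blast
  have mono: "\<And>x S T. x \<in> Wc \<Longrightarrow> S \<in> Nc x \<Longrightarrow> S \<subseteq> T \<Longrightarrow> T \<subseteq> Wc \<Longrightarrow> T \<in> Nc x"
    unfolding Nc_def by blast
  have "\<forall>V. \<forall>x\<in>Wc. sat Wc Nc V x (MImp (btr A) (btr B))"
    by (rule nb_sound[OF top mono m])
  then have "\<And>y. ptheory y \<Longrightarrow> A \<in> y \<Longrightarrow> B \<in> y" using truth unfolding Wc_def by fastforce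
  then show ?thesis by (rule valid_imp)
qed

theorem theorem4p2:
  fixes \<Gamma> \<Delta> :: "frm list"
  shows "WF_N2 (Imp (conj \<Gamma>) (disj \<Delta>)) \<longleftrightarrow> M_Nec (btr (Imp (conj \<Gamma>) (disj \<Delta>)))"
  using sound complete by blast

end
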